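(* Let $(\alpha_n,\beta_n)_{n\ge1}$ be integers with $8\sum_{k<n}\beta_k<\alpha_n\le\beta_n$ for every $n$ and $\sum_i \frac{\log\beta_i}{2^i}<\infty$. Then for all sufficiently small $\varepsilon>0$, a $B_\varepsilon$-random subset of $\mathbb{Z}^2$ is sparse (with respect to $(\alpha_n,\beta_n)$) with probability $1$.
   Context: Distances on $\mathbb{Z}^2$ are $\ell_\infty$; the diameter of a set is the maximal distance between its elements; the $\beta$-neighborhood of $X$ is the set of points at distance at most $\beta$ from some point of $X$. For $E\subset\mathbb{Z}^2$ and integers $\beta\ge\alpha>0$, a nonempty $X\subset E$ is an $(\alpha,\beta)$-island in $E$ if its diameter is at most $\alpha$ and the $\beta$-neighborhood of $X$ contains no point of $E\setminus X$. Given $(\alpha_i,\beta_i)$ with $\alpha_i\le\beta_i$, the cleaning process sets $E_0=E$ and obtains $E_i$ from $E_{i-1}$ by removing all $(\alpha_i,\beta_i)$-islands of $E_{i-1}$ (the rank $i$ islands); a point is affected at step $i$ if it lies in the $\beta_i$-neighborhood of some rank $i$ island. $E$ is sparse if every point of $E$ is removed at some step and every point of $\mathbb{Z}^2$ is affected at only finitely many steps. $B_\varepsilon$ is the Bernoulli distribution on subsets of $\mathbb{Z}^2$: each point belongs to the set independently with probability $\varepsilon$. *)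

theory Defs
  imports "HOL-Probability.Probability"
begin

type_synonym pt = "int \<times> int"

definition linf :: "pt \<Rightarrow> pt \<Rightarrow> int" where
  "linf p q = max \<bar>fst p - fst q\<bar> \<bar>snd p - snd q\<bar>"

definition island :: "int \<Rightarrow> int \<Rightarrow> pt set \<Rightarrow> pt set \<Rightarrow> bool" where
  "island a b E X \<longleftrightarrow> X \<noteq> {} \<and> X \<subseteq> E \<and>
     (\<forall>x\<in>X. \<forall>y\<in>X. linf x y \<le> a) \<and>
     (\<forall>y\<in>E - X. \<forall>x\<in>X. \<not> linf y x \<le> b)"

fun clean :: "(nat \<Rightarrow> int) \<Rightarrow> (nat \<Rightarrow> int) \<Rightarrow> pt set \<Rightarrow> nat \<Rightarrow> pt set" where
  "clean \<alpha> \<beta> E 0 = E"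
| "clean \<alpha> \<beta> E (Suc i) =
     clean \<alpha> \<beta> E i - \<Union>{X. island (\<alpha> (Suc i)) (\<beta> (Suc i)) (clean \<alpha> \<beta> E i) X}"

definition affected :: "(nat \<Rightarrow> int) \<Rightarrow> (nat \<Rightarrow> int) \<Rightarrow> pt set \<Rightarrow> nat \<Rightarrow> pt \<Rightarrow> bool" where
  "affected \<alpha> \<beta> E i p \<longleftrightarrow> 1 \<le> i \<and>
     (\<exists>X. island (\<alpha> i) (\<beta> i) (clean \<alpha> \<beta> E (i - 1)) X \<and> (\<exists>x\<in>X. linf p x \<le> \<beta> i))"

definition sparse :: "(nat \<Rightarrow> int) \<Rightarrow> (nat \<Rightarrow> int) \<Rightarrow> pt set \<Rightarrow> bool" where
  "sparse \<alpha> \<beta> E \<longleftrightarrow> (\<forall>p\<in>E. \<exists>i. p \<notin> clean \<alpha> \<beta> E i) \<and>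
     (\<forall>p. finite {i. affected \<alpha> \<beta> E i p})"

text \<open>Bernoulli distribution B_eps on subsets of Z^2, as a product measure on indicator functions.\<close>
definition bernoulli_field :: "real \<Rightarrow> (pt \<Rightarrow> bool) measure" where
  "bernoulli_field \<epsilon> = PiM UNIV (\<lambda>_. measure_pmf (bernoulli_pmf \<epsilon>))"

end

theory Submission
  imports Defs
begin



definition cyl :: "pt set \<Rightarrow> (pt \<Rightarrow> bool) set" where
  "cyl S = {\<omega>. \<forall>q\<in>S. \<omega> q}"

lemma cyl_emb: "cyl S = prod_emb UNIV (\<lambda>_. measure_pmf (bernoulli_pmf e)) S (\<Pi>\<^sub>E q\<in>S. {True})"
proof -
  have "\<And>\<omega>. (restrict \<omega> S \<in> (\<Pi>\<^sub>E q\<in>S. {True})) = (\<forall>q\<in>S. \<omega> q)"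
    unfolding restrict_PiE_iff Pi_iff by auto
  then show ?thesis unfolding cyl_def prod_emb_def space_PiM by auto
qed

lemma bf_prob: "prob_space (bernoulli_field e)"
  unfolding bernoulli_field_def by (rule prob_space_PiM) (simp add: prob_space_measure_pmf)

lemma cyl_sets: "finite S \<Longrightarrow> cyl S \<in> sets (bernoulli_field e)"
  unfolding bernoulli_field_def cyl_emb[of S e] by (rule sets_PiM_I) auto

lemma cyl_measure:
  assumes "finite S" "0 \<le> e" "e \<le> 1"
  shows "measure (bernoulli_field e) (cyl S) = e ^ card S"
proof -
  have "emeasure (bernoulli_field e) (cyl S) = (\<Prod>i\<in>S. emeasure (measure_pmf (bernoulli_pmf e)) {True})"
    unfolding bernoulli_field_def cyl_emb[of S e]
    by (rule emeasure_PiM_emb) (auto simp: prob_space_measure_pmf assms)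
  also have "\<dots> = ennreal (e ^ card S)"
    using assms by (simp add: emeasure_pmf_single ennreal_power)
  finally show ?thesis using assms by (simp add: measure_def)
qed




lemma linf_self[simp]: "linf x x = 0" by (simp add: linf_def)
lemma linf_sym: "linf x y = linf y x" by (simp add: linf_def abs_minus_commute)
lemma linf_nonneg: "0 \<le> linf x y" by (simp add: linf_def)
lemma linf_tri: "linf x z \<le> linf x y + linf y z"
  unfolding linf_def by (simp add: max_def abs_if split: if_splits) linarith?

definition sqbox :: "pt \<Rightarrow> int \<Rightarrow> pt set" where
  "sqbox x r = {z. linf x z \<le> r}"

lemma sqbox_eq: "sqbox x r = {fst x - r..fst x + r} \<times> {snd x - r..snd x + r}"
  unfolding sqbox_def linf_def by (auto simp: abs_le_iff)

lemma sqbox_finite: "finite (sqbox x r)" by (simp add: sqbox_eq)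

lemma sqbox_card: "0 \<le> r \<Longrightarrow> card (sqbox x r) = nat (2*r+1)^2"
  by (simp add: sqbox_eq card_cartesian_product power2_eq_square nat_mult_distrib)

fun W :: "(nat\<Rightarrow>int) \<Rightarrow> (nat\<Rightarrow>int) \<Rightarrow> nat \<Rightarrow> pt \<Rightarrow> pt set set" where
  "W \<alpha> \<beta> 0 x = {{x}}"
| "W \<alpha> \<beta> (Suc k) x = {A \<union> B | A y B. A \<in> W \<alpha> \<beta> k x \<and> y \<in> sqbox x (\<alpha> (Suc k) div 2 + \<beta> (Suc k))
       \<and> B \<in> W \<alpha> \<beta> k y \<and> A \<inter> B = {}}"

lemma W_card_set: "S \<in> W \<alpha> \<beta> k x \<Longrightarrow> finite S \<and> card S = 2^k"
proof (induction k arbitrary: x S)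
  case 0 then show ?case by simp
next
  case (Suc k)
  then obtain A y B where "S = A \<union> B" "A \<in> W \<alpha> \<beta> k x" "B \<in> W \<alpha> \<beta> k y" "A \<inter> B = {}" by auto
  with Suc.IH[of A x] Suc.IH[of B y] show ?case by (simp add: card_Un_disjoint)
qed

lemma W_local:
  assumes "\<And>n. n \<ge> 1 \<Longrightarrow> 0 \<le> \<beta> n \<and> \<alpha> n div 2 \<le> \<beta> n"
  shows "S \<in> W \<alpha> \<beta> k x \<Longrightarrow> q \<in> S \<Longrightarrow> linf x q \<le> 2 * (\<Sum>i\<in>{1..k}. \<beta> i)"
proof (induction k arbitrary: x S q)
  case 0 then show ?case by simp
next
  case (Suc k)
  then obtain A y B where S: "S = A \<union> B" "A \<in> W \<alpha> \<beta> k x" "B \<in> W \<alpha> \<beta> k y"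
     and y: "linf x y \<le> \<alpha> (Suc k) div 2 + \<beta> (Suc k)" by (auto simp: sqbox_def)
  have b: "0 \<le> \<beta> (Suc k)" "\<alpha> (Suc k) div 2 \<le> \<beta> (Suc k)" using assms[of "Suc k"] by auto
  have sumS: "(\<Sum>i\<in>{1..Suc k}. \<beta> i) = (\<Sum>i\<in>{1..k}. \<beta> i) + \<beta> (Suc k)" by simp
  show ?case
  proof (cases "q \<in> A")
    case True
    then show ?thesis using Suc.IH[OF S(2) True] b sumS by linarith
  next
    case False
    then have "q \<in> B" using S Suc.prems by auto
    from Suc.IH[OF S(3) this] have "linf y q \<le> 2 * (\<Sum>i\<in>{1..k}. \<beta> i)" .
    then show ?thesis using linf_tri[of x q y] y b sumS by linarith
  qed
qed




lemma alpha_pos: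
  fixes \<alpha> \<beta> :: "nat \<Rightarrow> int" and n :: nat
  assumes growth: "\<And>n. n \<ge> 1 \<Longrightarrow> 8 * (\<Sum>k\<in>{1..<n}. \<beta> k) < \<alpha> n \<and> \<alpha> n \<le> \<beta> n"
  shows "n \<ge> 1 \<Longrightarrow> 1 \<le> \<alpha> n"
proof (induction n rule: less_induct)
  case (less n)
  have "\<forall>k\<in>{1..<n}. 0 \<le> \<beta> k"
  proof
    fix k assume k: "k \<in> {1..<n}"
    then have "1 \<le> \<alpha> k" using less.IH[of k] by auto
    then show "0 \<le> \<beta> k" using growth[of k] k by auto
  qed
  then have "0 \<le> (\<Sum>k\<in>{1..<n}. \<beta> k)" by (intro sum_nonneg) blast
  with growth[OF less.prems] show ?case by linarith
qed

lemma witness: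
  assumes growth: "\<And>n. n \<ge> 1 \<Longrightarrow> 8 * (\<Sum>k\<in>{1..<n}. \<beta> k) < \<alpha> n \<and> \<alpha> n \<le> \<beta> n"
  shows "x \<in> clean \<alpha> \<beta> E k \<Longrightarrow> \<exists>S\<in>W \<alpha> \<beta> k x. S \<subseteq> E"
proof (induction k arbitrary: x)
  case 0 then show ?case by simp
next
  case (Suc k)
  have ab: "\<And>n. n \<ge> 1 \<Longrightarrow> 0 \<le> \<beta> n \<and> \<alpha> n div 2 \<le> \<beta> n"
  proof -
    fix n :: nat assume n: "n \<ge> 1"
    have "1 \<le> \<alpha> n" by (rule alpha_pos[OF growth n])
    then show "0 \<le> \<beta> n \<and> \<alpha> n div 2 \<le> \<beta> n" using growth[OF n] by auto
  qed
  define h where "h = \<alpha> (Suc k) div 2"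
  define Sk where "Sk = (\<Sum>i\<in>{1..k}. \<beta> i)"
  have g: "8 * Sk < \<alpha> (Suc k)" using growth[of "Suc k"] unfolding Sk_def
    by (simp add: atLeastLessThanSuc_atLeastAtMost)
  have h4: "4 * Sk \<le> h" unfolding h_def using g by presburger
  have h2: "2 * h \<le> \<alpha> (Suc k)" unfolding h_def by presburger
  have xk: "x \<in> clean \<alpha> \<beta> E k" and notin: "\<And>X. island (\<alpha> (Suc k)) (\<beta> (Suc k)) (clean \<alpha> \<beta> E k) X \<Longrightarrow> x \<notin> X"
    using Suc.prems by auto
  define X where "X = {z \<in> clean \<alpha> \<beta> E k. linf x z \<le> h}"
  have "1 \<le> \<alpha> (Suc k)" using alpha_pos[OF growth, of "Suc k"] by simp
  then have "0 \<le> h" unfolding h_def by presburger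
  then have xX: "x \<in> X" using xk by (auto simp: X_def)
  have notisl: "\<not> island (\<alpha> (Suc k)) (\<beta> (Suc k)) (clean \<alpha> \<beta> E k) X" using notin xX by blast
  have diam: "\<forall>a\<in>X. \<forall>b\<in>X. linf a b \<le> \<alpha> (Suc k)"
  proof (intro ballI)
    fix a b assume "a \<in> X" "b \<in> X"
    then have "linf x a \<le> h" "linf x b \<le> h" by (auto simp: X_def)
    then show "linf a b \<le> \<alpha> (Suc k)" using linf_tri[of a b x] linf_sym[of a x] h2 by linarith
  qed
  have "X \<noteq> {}" using xX by blast
  have "X \<subseteq> clean \<alpha> \<beta> E k" by (auto simp: X_def)
  with \<open>X \<noteq> {}\<close> notisl diam obtain y z where y: "y \<in> clean \<alpha> \<beta> E k" "y \<notin> X" and z: "z \<in> X" "linf y z \<le> \<beta> (Suc k)"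
    unfolding island_def by blast
  have yfar: "h < linf x y" using y by (auto simp: X_def)
  have "linf x z \<le> h" using z by (auto simp: X_def)
  then have ynear: "linf x y \<le> h + \<beta> (Suc k)" using linf_tri[of x y z] linf_sym[of y z] z by linarith
  obtain A where A: "A \<in> W \<alpha> \<beta> k x" "A \<subseteq> E" using Suc.IH[OF xk] by blast
  obtain B where B: "B \<in> W \<alpha> \<beta> k y" "B \<subseteq> E" using Suc.IH[OF y(1)] by blast
  have disj: "A \<inter> B = {}"
  proof (rule ccontr)
    assume "A \<inter> B \<noteq> {}"
    then obtain a where a: "a \<in> A" "a \<in> B" by auto
    have "linf x a \<le> 2 * Sk" using W_local[OF ab A(1) a(1)] unfolding Sk_def .
    moreover have "linf y a \<le> 2 * Sk" using W_local[OF ab B(1) a(2)] unfolding Sk_def .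
    ultimately show False using linf_tri[of x y a] linf_sym[of y a] yfar h4 by linarith
  qed
  have "A \<union> B \<in> W \<alpha> \<beta> (Suc k) x"
    using A(1) B(1) disj ynear unfolding h_def W.simps sqbox_def mem_Collect_eq by blast
  then show ?case using A B by blast
qed




fun Nw :: "(nat\<Rightarrow>int) \<Rightarrow> (nat\<Rightarrow>int) \<Rightarrow> nat \<Rightarrow> nat" where
  "Nw \<alpha> \<beta> 0 = 1"
| "Nw \<alpha> \<beta> (Suc k) = Nw \<alpha> \<beta> k ^ 2 * nat (2 * (\<alpha> (Suc k) div 2 + \<beta> (Suc k)) + 1) ^ 2"

lemma W_card:
  assumes pos: "\<And>n. n \<ge> 1 \<Longrightarrow> 0 \<le> \<alpha> n div 2 + \<beta> n"
  shows "finite (W \<alpha> \<beta> k x) \<and> card (W \<alpha> \<beta> k x) \<le> Nw \<alpha> \<beta> k"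
proof (induction k arbitrary: x)
  case 0 then show ?case by simp
next
  case (Suc k)
  define r where "r = \<alpha> (Suc k) div 2 + \<beta> (Suc k)"
  have r0: "0 \<le> r" using pos[of "Suc k"] by (simp add: r_def)
  define T where "T = (SIGMA A:W \<alpha> \<beta> k x. SIGMA y:sqbox x r. W \<alpha> \<beta> k y)"
  have sub: "W \<alpha> \<beta> (Suc k) x \<subseteq> (\<lambda>(A,y,B). A \<union> B) ` T"
  proof
    fix S assume "S \<in> W \<alpha> \<beta> (Suc k) x"
    then obtain A y B where "S = A \<union> B" "A \<in> W \<alpha> \<beta> k x" "y \<in> sqbox x r" "B \<in> W \<alpha> \<beta> k y"
      unfolding W.simps r_def by blast
    then show "S \<in> (\<lambda>(A,y,B). A \<union> B) ` T" unfolding T_def by (intro image_eqI[of _ _ "(A,y,B)"]) auto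
  qed
  have fT: "finite T" unfolding T_def using Suc.IH sqbox_finite by (intro finite_SigmaI) auto
  have "card T = (\<Sum>A\<in>W \<alpha> \<beta> k x. \<Sum>y\<in>sqbox x r. card (W \<alpha> \<beta> k y))"
    unfolding T_def using Suc.IH sqbox_finite by (simp add: card_SigmaI)
  also have "\<dots> \<le> (\<Sum>A\<in>W \<alpha> \<beta> k x. \<Sum>y\<in>sqbox x r. Nw \<alpha> \<beta> k)"
    using Suc.IH by (intro sum_mono) auto
  also have "\<dots> = card (W \<alpha> \<beta> k x) * (card (sqbox x r) * Nw \<alpha> \<beta> k)" by simp
  also have "\<dots> \<le> Nw \<alpha> \<beta> k * (card (sqbox x r) * Nw \<alpha> \<beta> k)"
    using Suc.IH by (intro mult_right_mono) auto
  also have "\<dots> = Nw \<alpha> \<beta> (Suc k)" using sqbox_card[OF r0, of x] by (simp add: r_def power2_eq_square)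
  finally have cT: "card T \<le> Nw \<alpha> \<beta> (Suc k)" .
  have "finite (W \<alpha> \<beta> (Suc k) x)" using sub fT finite_subset by blast
  moreover have "card (W \<alpha> \<beta> (Suc k) x) \<le> card T"
    using card_mono[OF _ sub] card_image_le[OF fT] fT by (meson finite_imageI le_trans)
  ultimately show ?case using cT by linarith
qed




lemma Nw_bound:
  fixes \<alpha> \<beta> :: "nat \<Rightarrow> int"
  assumes growth: "\<And>n. n \<ge> 1 \<Longrightarrow> 8 * (\<Sum>k\<in>{1..<n}. \<beta> k) < \<alpha> n \<and> \<alpha> n \<le> \<beta> n"
    and summ: "summable (\<lambda>i. ln (real_of_int (\<beta> (Suc i))) / 2 ^ (Suc i))"
  shows "\<exists>C\<ge>1. \<forall>k. real (Nw \<alpha> \<beta> k) \<le> C ^ (2^k)"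
proof -
  define Mr where "Mr i = real (nat (2 * (\<alpha> i div 2 + \<beta> i) + 1) ^ 2)" for i
  define a where "a i = ln (Mr (Suc i)) / 2 ^ Suc i" for i
  have bnd: "1 \<le> Mr (Suc i) \<and> Mr (Suc i) \<le> 16 * (real_of_int (\<beta> (Suc i)))^2 \<and> 1 \<le> \<beta> (Suc i)" for i
  proof -
    have a1: "1 \<le> \<alpha> (Suc i)" using alpha_pos[OF growth, of "Suc i"] by simp
    have ab: "\<alpha> (Suc i) \<le> \<beta> (Suc i)" using growth[of "Suc i"] by simp
    define t where "t = 2 * (\<alpha> (Suc i) div 2 + \<beta> (Suc i)) + 1"
    have t1: "1 \<le> t" "t \<le> 4 * \<beta> (Suc i)" unfolding t_def using a1 ab by presburger+
    have "Mr (Suc i) = (real_of_int t)^2" unfolding Mr_def t_def[symmetric] using t1 by simp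
    moreover have "(real_of_int t)^2 \<le> (4 * real_of_int (\<beta> (Suc i)))^2"
      using t1 by (intro power_mono) linarith+
    ultimately show ?thesis using t1 a1 ab by (simp add: power_mult_distrib)
  qed
  have a0: "0 \<le> a i" for i using bnd[of i] by (simp add: a_def)
  have aub: "a i \<le> ln 16 / 2 ^ Suc i + 2 * (ln (real_of_int (\<beta> (Suc i))) / 2 ^ Suc i)" for i
  proof -
    have b1: "1 \<le> real_of_int (\<beta> (Suc i))" using bnd[of i] by simp
    have "ln (Mr (Suc i)) \<le> ln (16 * (real_of_int (\<beta> (Suc i)))^2)"
      using bnd[of i] by (subst ln_le_cancel_iff) auto
    also have "\<dots> = ln 16 + 2 * ln (real_of_int (\<beta> (Suc i)))"
      using b1 by (simp add: ln_mult ln_realpow)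
    finally have "ln (Mr (Suc i)) / 2^Suc i \<le> (ln 16 + 2 * ln (real_of_int (\<beta> (Suc i)))) / 2^Suc i"
      by (intro divide_right_mono) auto
    then show ?thesis unfolding a_def by (simp only: add_divide_distrib times_divide_eq_right)
  qed
  have sa: "summable a"
  proof (rule summable_comparison_test'[where N=0])
    show "summable (\<lambda>i. ln 16 / 2 ^ Suc i + 2 * (ln (real_of_int (\<beta> (Suc i))) / 2 ^ Suc i))"
    proof (intro summable_add summable_mult summ)
      have "summable (\<lambda>i. (ln 16 / 2) * (1/2::real) ^ i)" by (intro summable_mult summable_geometric) simp
      then show "summable (\<lambda>i. ln 16 / 2 ^ Suc i :: real)" by (simp add: power_one_over field_simps)
    qed
    show "\<And>n. 0 \<le> n \<Longrightarrow> norm (a n) \<le> ln 16 / 2 ^ Suc n + 2 * (ln (real_of_int (\<beta> (Suc n))) / 2 ^ Suc n)"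
      using a0 aub by simp
  qed
  define L where "L = suminf a"
  have ind: "real (Nw \<alpha> \<beta> k) \<le> exp (2^k * (\<Sum>i<k. a i))" for k
  proof (induction k)
    case 0 then show ?case by simp
  next
    case (Suc k)
    have M1: "1 \<le> Mr (Suc k)" using bnd[of k] by simp
    have "real (Nw \<alpha> \<beta> (Suc k)) = real (Nw \<alpha> \<beta> k)^2 * Mr (Suc k)" by (simp add: Mr_def)
    also have "\<dots> \<le> exp (2^k * (\<Sum>i<k. a i))^2 * Mr (Suc k)"
      using Suc.IH M1 by (intro mult_right_mono power_mono) auto
    also have "\<dots> = exp (2^Suc k * (\<Sum>i<k. a i) + ln (Mr (Suc k)))"
      using M1 by (simp add: exp_add power2_eq_square exp_add[symmetric])
    also have "\<dots> = exp (2^Suc k * (\<Sum>i<Suc k. a i))"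
      by (simp add: a_def distrib_left)
    finally show ?case .
  qed
  have "real (Nw \<alpha> \<beta> k) \<le> exp L ^ (2^k)" for k
  proof -
    have "(\<Sum>i<k. a i) \<le> L" unfolding L_def using sa a0 by (intro sum_le_suminf) auto
    then have "exp (2^k * (\<Sum>i<k. a i)) \<le> exp (real (2^k) * L)" by simp
    also have "\<dots> = exp L ^ (2^k)" by (rule exp_of_nat_mult)
    finally show ?thesis using ind[of k] by linarith
  qed
  moreover have "1 \<le> exp L" unfolding L_def using sa a0 by (simp add: suminf_nonneg)
  ultimately show ?thesis by blast
qed




lemma Nw_pos:
  assumes pos: "\<And>n. n \<ge> 1 \<Longrightarrow> 0 \<le> \<alpha> n div 2 + \<beta> n"
  shows "1 \<le> Nw \<alpha> \<beta> k"
proof (induction k)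
  case 0 then show ?case by simp
next
  case (Suc k)
  have "1 \<le> nat (2 * (\<alpha> (Suc k) div 2 + \<beta> (Suc k)) + 1)" using pos[of "Suc k"] by simp
  then have "1 \<le> nat (2 * (\<alpha> (Suc k) div 2 + \<beta> (Suc k)) + 1) ^ 2" by simp
  moreover have "1 \<le> Nw \<alpha> \<beta> k ^ 2" using Suc.IH by simp
  ultimately show ?case by (simp add: one_le_mult_iff)
qed

theorem lemma1:
  fixes \<alpha> \<beta> :: "nat \<Rightarrow> int"
  assumes growth: "\<And>n. n \<ge> 1 \<Longrightarrow> 8 * (\<Sum>k\<in>{1..<n}. \<beta> k) < \<alpha> n \<and> \<alpha> n \<le> \<beta> n"
    and summ: "summable (\<lambda>i. ln (real_of_int (\<beta> (Suc i))) / 2 ^ (Suc i))"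
  shows "\<exists>\<epsilon>0>0. \<forall>\<epsilon>. 0 < \<epsilon> \<and> \<epsilon> < \<epsilon>0 \<longrightarrow>
           (AE \<omega> in bernoulli_field \<epsilon>. sparse \<alpha> \<beta> {p. \<omega> p})"
proof -
  obtain C :: real where C1: "C \<ge> 1" and CN: "\<And>k. real (Nw \<alpha> \<beta> k) \<le> C ^ (2^k)"
    using Nw_bound[OF growth summ] by blast
  have ab: "\<And>n. n \<ge> 1 \<Longrightarrow> 0 \<le> \<beta> n \<and> \<alpha> n div 2 \<le> \<beta> n \<and> 0 \<le> \<alpha> n div 2"
  proof -
    fix n :: nat assume n: "n \<ge> 1"
    have "1 \<le> \<alpha> n" by (rule alpha_pos[OF growth n])
    then show "0 \<le> \<beta> n \<and> \<alpha> n div 2 \<le> \<beta> n \<and> 0 \<le> \<alpha> n div 2" using growth[OF n] by auto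
  qed
  have pos: "\<And>n. n \<ge> 1 \<Longrightarrow> 0 \<le> \<alpha> n div 2 + \<beta> n" using ab by fastforce
  define e0 where "e0 = 1 / (2 * C^2)"
  have e0: "0 < e0" unfolding e0_def using C1 by simp
  show ?thesis
  proof (intro exI[of _ e0] conjI e0 allI impI)
    fix e :: real assume e: "0 < e \<and> e < e0"
    have "C^2 * e \<le> 1/2"
    proof -
      have "C^2 * e \<le> C^2 * e0" using e C1 by (intro mult_left_mono) auto
      also have "\<dots> = 1/2" unfolding e0_def using C1 by simp
      finally show ?thesis .
    qed
    note Ce = this
    have "C^2 \<ge> 1" using C1 by simp
    then have "e0 \<le> 1/2" unfolding e0_def by (auto simp: divide_le_eq)
    then have e1: "e \<le> 1" using e by linarith
    define M where "M = bernoulli_field e"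
    interpret prob_space M unfolding M_def by (rule bf_prob)
    have spM: "space M = UNIV" unfolding M_def bernoulli_field_def by (simp add: space_PiM)
    define F where "F j p = (\<Union>z\<in>sqbox p (\<beta> (Suc j)). \<Union>S\<in>W \<alpha> \<beta> j z. cyl S)" for j p
    have Wfin: "finite (W \<alpha> \<beta> j z)" for j z using W_card[of \<alpha> \<beta>, OF pos] by blast
    have Fsets: "F j p \<in> sets M" for j p
      unfolding F_def M_def using Wfin sqbox_finite W_card_set
      by (intro sets.finite_UN cyl_sets) blast+
    have Fmeas: "measure M (F j p) \<le> (1/2)^j" for j p
    proof -
      have "measure M (F j p) \<le> (\<Sum>z\<in>sqbox p (\<beta> (Suc j)). measure M (\<Union>S\<in>W \<alpha> \<beta> j z. cyl S))"
        unfolding F_def using Wfin sqbox_finite W_card_set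
        by (intro finite_measure_subadditive_finite) (auto simp: M_def intro!: sets.finite_UN cyl_sets)
      also have "\<dots> \<le> (\<Sum>z\<in>sqbox p (\<beta> (Suc j)). \<Sum>S\<in>W \<alpha> \<beta> j z. measure M (cyl S))"
        using Wfin W_card_set
        by (intro sum_mono finite_measure_subadditive_finite) (auto simp: M_def intro!: cyl_sets)
      also have "\<dots> = (\<Sum>z\<in>sqbox p (\<beta> (Suc j)). \<Sum>S\<in>W \<alpha> \<beta> j z. e ^ (2^j))"
        using W_card_set e e1 by (intro sum.cong refl) (auto simp: M_def cyl_measure)
      also have "\<dots> \<le> (\<Sum>z\<in>sqbox p (\<beta> (Suc j)). real (Nw \<alpha> \<beta> j) * e ^ (2^j))"
        using W_card[of \<alpha> \<beta>, OF pos] e by (intro sum_mono) (auto intro!: mult_right_mono)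
      also have "\<dots> = real (card (sqbox p (\<beta> (Suc j))) * Nw \<alpha> \<beta> j) * e ^ (2^j)" by simp
      also have "\<dots> \<le> real (Nw \<alpha> \<beta> (Suc j)) * e ^ (2^j)"
      proof -
        have b: "0 \<le> \<beta> (Suc j)" "0 \<le> \<alpha> (Suc j) div 2" using ab[of "Suc j"] by auto
        have "card (sqbox p (\<beta> (Suc j))) = nat (2 * \<beta> (Suc j) + 1)^2" using sqbox_card b by blast
        also have "\<dots> \<le> nat (2 * (\<alpha> (Suc j) div 2 + \<beta> (Suc j)) + 1) ^ 2"
          using b by (intro power_mono nat_mono) auto
        finally have c: "card (sqbox p (\<beta> (Suc j))) \<le> nat (2 * (\<alpha> (Suc j) div 2 + \<beta> (Suc j)) + 1) ^ 2" .
        have n1: "1 \<le> Nw \<alpha> \<beta> j" by (rule Nw_pos[of \<alpha> \<beta>, OF pos])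
        have "card (sqbox p (\<beta> (Suc j))) * Nw \<alpha> \<beta> j \<le> nat (2 * (\<alpha> (Suc j) div 2 + \<beta> (Suc j)) + 1) ^ 2 * Nw \<alpha> \<beta> j ^ 2"
          using c n1 by (intro mult_mono) (auto simp: power2_eq_square)
        then have "card (sqbox p (\<beta> (Suc j))) * Nw \<alpha> \<beta> j \<le> Nw \<alpha> \<beta> (Suc j)" by (simp add: mult.commute)
        then have "real (card (sqbox p (\<beta> (Suc j))) * Nw \<alpha> \<beta> j) \<le> real (Nw \<alpha> \<beta> (Suc j))"
          by (rule of_nat_mono)
        then show ?thesis using e by (intro mult_right_mono) auto
      qed
      also have "\<dots> \<le> C ^ (2^Suc j) * e ^ (2^j)" by (rule mult_right_mono[OF CN]) (use e in simp)
      also have "\<dots> = (C^2 * e) ^ (2^j)" by (simp add: power_mult power_mult_distrib)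
      also have "\<dots> \<le> (1/2) ^ (2^j)" using Ce e C1 by (intro power_mono) auto
      also have "\<dots> \<le> (1/2) ^ j" by (intro power_decreasing) (auto intro: less_imp_le less_exp)
      finally show ?thesis .
    qed
    have AEp: "AE \<omega> in M. eventually (\<lambda>j. \<omega> \<in> space M - F j p) sequentially" for p
    proof (rule borel_cantelli_AE1)
      show "\<And>n. F n p \<in> sets M" by (rule Fsets)
      show "\<And>n. emeasure M (F n p) < \<infinity>" by (simp add: less_top[symmetric])
      show "summable (\<lambda>n. measure M (F n p))"
        by (rule summable_comparison_test'[where N=0 and g="\<lambda>j. (1/2)^j"]) (auto simp: Fmeas)
    qed
    have "AE \<omega> in M. \<forall>p. eventually (\<lambda>j. \<omega> \<in> space M - F j p) sequentially"
      using AEp by (simp add: AE_all_countable)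
    moreover have "AE \<omega> in M. (\<forall>p. eventually (\<lambda>j. \<omega> \<in> space M - F j p) sequentially) \<longrightarrow> sparse \<alpha> \<beta> {p. \<omega> p}"
    proof (rule AE_I2, rule impI)
      fix \<omega> assume ev: "\<forall>p. eventually (\<lambda>j. \<omega> \<in> space M - F j p) sequentially"
      define E where "E = {p. \<omega> p}"
      have key: "\<omega> \<in> F j p" if xc: "x \<in> clean \<alpha> \<beta> E j" and lp: "linf p x \<le> \<beta> (Suc j)" for x j p
      proof -
        obtain S where "S \<in> W \<alpha> \<beta> j x" "S \<subseteq> E" using witness[of \<beta> \<alpha>, OF growth xc] by blast
        moreover from this(2) have "\<omega> \<in> cyl S" by (auto simp: cyl_def E_def)
        moreover have "x \<in> sqbox p (\<beta> (Suc j))" using lp by (simp add: sqbox_def)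
        ultimately show ?thesis unfolding F_def by blast
      qed
      have evN: "\<exists>N. \<forall>j\<ge>N. \<omega> \<notin> F j p" for p using ev[rule_format, of p]
        by (auto simp: eventually_sequentially spM)
      have P1: "\<exists>i. p \<notin> clean \<alpha> \<beta> E i" for p
      proof -
        obtain N where N: "\<forall>j\<ge>N. \<omega> \<notin> F j p" using evN by blast
        have "p \<notin> clean \<alpha> \<beta> E N"
        proof
          assume "p \<in> clean \<alpha> \<beta> E N"
          moreover have "linf p p \<le> \<beta> (Suc N)" using ab[of "Suc N"] by simp
          ultimately have "\<omega> \<in> F N p" by (rule key)
          then show False using N by auto
        qed
        then show ?thesis by blast
      qed
      have P2: "finite {i. affected \<alpha> \<beta> E i p}" for p
      proof -
        obtain N where N: "\<forall>j\<ge>N. \<omega> \<notin> F j p" using evN by blast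
        have "{i. affected \<alpha> \<beta> E i p} \<subseteq> {..N}"
        proof
          fix i assume "i \<in> {i. affected \<alpha> \<beta> E i p}"
          then have "affected \<alpha> \<beta> E i p" by simp
          then obtain X x where i1: "1 \<le> i" and X: "island (\<alpha> i) (\<beta> i) (clean \<alpha> \<beta> E (i - 1)) X"
            and x: "x \<in> X" "linf p x \<le> \<beta> i"
            unfolding affected_def by blast
          define j where "j = i - 1"
          have ij: "i = Suc j" using i1 unfolding j_def by simp
          have X': "island (\<alpha> i) (\<beta> i) (clean \<alpha> \<beta> E j) X" using X unfolding j_def .
          have xc: "x \<in> clean \<alpha> \<beta> E j" using X' x(1) unfolding island_def by blast
          have "\<omega> \<in> F j p" by (rule key[OF xc]) (use x(2) ij in simp)
          then have "j < N" using N by (meson not_le)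
          then show "i \<in> {..N}" using ij by simp
        qed
        then show ?thesis by (rule finite_subset) simp
      qed
      show "sparse \<alpha> \<beta> {p. \<omega> p}" unfolding sparse_def E_def[symmetric] using P1 P2 by blast
    qed
    ultimately show "AE \<omega> in bernoulli_field e. sparse \<alpha> \<beta> {p. \<omega> p}"
      unfolding M_def[symmetric] by (rule AE_mp)
  qed
qed


end
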